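(* Let $G$ be a finite group, $(C_1,C_2,C_3,C_4)$ a class vector of $G$ and $\rho_4$ the permutation representation of the pure braid group $B_4$ on $\Sigma^i(C_1,C_2,C_3,C_4)$. If $\rho_4(\beta_{12})$, $\rho_4(\beta_{13})$ and $\rho_4(\beta_{14})$ are involutions, then $\rho_4(B_4)\cong C_2\times C_2$.
   Context: A class vector is a tuple of non-trivial conjugacy classes. $\Sigma^i(C_1,\dots,C_4)$ is the set of $G$-conjugacy classes $[\sigma_1,\dots,\sigma_4]$ (simultaneous conjugation) of tuples with $\sigma_j\in C_j$, $\langle\sigma_1,\dots,\sigma_4\rangle=G$, $\sigma_1\sigma_2\sigma_3\sigma_4=\iota$ ($\iota$ the identity). The Hurwitz braid group $H_4=\langle\beta_2,\beta_3,\beta_4\rangle$ acts from the right by $[\underline{\sigma}]^{\beta_2}=[\sigma_1\sigma_2\sigma_1^{-1},\sigma_1,\sigma_3,\sigma_4]$, $[\underline{\sigma}]^{\beta_3}=[\sigma_1,\sigma_2\sigma_3\sigma_2^{-1},\sigma_2,\sigma_4]$, $[\underline{\sigma}]^{\beta_4}=[\sigma_1,\sigma_2,\sigma_3\sigma_4\sigma_3^{-1},\sigma_3]$. The pure braid group $B_4$ is generated by $\beta_{12}=\beta_2^2$, $\beta_{13}=\beta_2^{-1}\beta_3^2\beta_2$, $\beta_{14}=\beta_2^{-1}\beta_3^{-1}\beta_4^2\beta_3\beta_2$, $\beta_{23}=\beta_3^2$, $\beta_{24}=\beta_3^{-1}\beta_4^2\beta_3$, $\beta_{34}=\beta_4^2$,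 and preserves $\Sigma^i(C_1,\dots,C_4)$. An involution is an element of order $2$. *)

theory Defs
  imports "HOL-Algebra.Algebra"
begin

definition conj_class :: "('a, 'b) monoid_scheme \<Rightarrow> 'a \<Rightarrow> 'a set" where
  "conj_class G g = (\<lambda>h. h \<otimes>\<^bsub>G\<^esub> g \<otimes>\<^bsub>G\<^esub> inv\<^bsub>G\<^esub> h) ` carrier G"

definition is_conj_class :: "('a, 'b) monoid_scheme \<Rightarrow> 'a set \<Rightarrow> bool" where
  "is_conj_class G C \<longleftrightarrow> (\<exists>g \<in> carrier G. C = conj_class G g)"

definition nontrivial_conj_class :: "('a, 'b) monoid_scheme \<Rightarrow> 'a set \<Rightarrow> bool" where
  "nontrivial_conj_class G C \<longleftrightarrow> is_conj_class G C \<and> C \<noteq> {\<one>\<^bsub>G\<^esub>}"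

type_synonym 'a tuple4 = "'a \<times> 'a \<times> 'a \<times> 'a"

fun tconj :: "('a, 'b) monoid_scheme \<Rightarrow> 'a \<Rightarrow> 'a tuple4 \<Rightarrow> 'a tuple4" where
  "tconj G h (a, b, c, d) =
     (h \<otimes>\<^bsub>G\<^esub> a \<otimes>\<^bsub>G\<^esub> inv\<^bsub>G\<^esub> h, h \<otimes>\<^bsub>G\<^esub> b \<otimes>\<^bsub>G\<^esub> inv\<^bsub>G\<^esub> h,
      h \<otimes>\<^bsub>G\<^esub> c \<otimes>\<^bsub>G\<^esub> inv\<^bsub>G\<^esub> h, h \<otimes>\<^bsub>G\<^esub> d \<otimes>\<^bsub>G\<^esub> inv\<^bsub>G\<^esub> h)"

definition tclass :: "('a, 'b) monoid_scheme \<Rightarrow> 'a tuple4 \<Rightarrow> 'a tuple4 set" where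
  "tclass G s = (\<lambda>h. tconj G h s) ` carrier G"

definition Ni :: "('a, 'b) monoid_scheme \<Rightarrow> 'a set \<Rightarrow> 'a set \<Rightarrow> 'a set \<Rightarrow> 'a set \<Rightarrow> 'a tuple4 set" where
  "Ni G C1 C2 C3 C4 = {(a, b, c, d). a \<in> C1 \<and> b \<in> C2 \<and> c \<in> C3 \<and> d \<in> C4 \<and>
      a \<otimes>\<^bsub>G\<^esub> b \<otimes>\<^bsub>G\<^esub> c \<otimes>\<^bsub>G\<^esub> d = \<one>\<^bsub>G\<^esub> \<and>
      generate G {a, b, c, d} = carrier G}"

definition Sigma_i :: "('a, 'b) monoid_scheme \<Rightarrow> 'a set \<Rightarrow> 'a set \<Rightarrow> 'a set \<Rightarrow> 'a set \<Rightarrow> 'a tuple4 set set" where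
  "Sigma_i G C1 C2 C3 C4 = tclass G ` Ni G C1 C2 C3 C4"

fun hb2 :: "('a, 'b) monoid_scheme \<Rightarrow> 'a tuple4 \<Rightarrow> 'a tuple4" where
  "hb2 G (a, b, c, d) = (a \<otimes>\<^bsub>G\<^esub> b \<otimes>\<^bsub>G\<^esub> inv\<^bsub>G\<^esub> a, a, c, d)"
fun hb3 :: "('a, 'b) monoid_scheme \<Rightarrow> 'a tuple4 \<Rightarrow> 'a tuple4" where
  "hb3 G (a, b, c, d) = (a, b \<otimes>\<^bsub>G\<^esub> c \<otimes>\<^bsub>G\<^esub> inv\<^bsub>G\<^esub> b, b, d)"
fun hb4 :: "('a, 'b) monoid_scheme \<Rightarrow> 'a tuple4 \<Rightarrow> 'a tuple4" where
  "hb4 G (a, b, c, d) = (a, b, c \<otimes>\<^bsub>G\<^esub> d \<otimes>\<^bsub>G\<^esub> inv\<^bsub>G\<^esub> c, c)"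

fun hb2inv :: "('a, 'b) monoid_scheme \<Rightarrow> 'a tuple4 \<Rightarrow> 'a tuple4" where
  "hb2inv G (a, b, c, d) = (b, inv\<^bsub>G\<^esub> b \<otimes>\<^bsub>G\<^esub> a \<otimes>\<^bsub>G\<^esub> b, c, d)"
fun hb3inv :: "('a, 'b) monoid_scheme \<Rightarrow> 'a tuple4 \<Rightarrow> 'a tuple4" where
  "hb3inv G (a, b, c, d) = (a, c, inv\<^bsub>G\<^esub> c \<otimes>\<^bsub>G\<^esub> b \<otimes>\<^bsub>G\<^esub> c, d)"

text \<open>Pure braid generators acting on tuples (right action: a word is applied
  from left to right).\<close>

definition pb12 :: "('a, 'b) monoid_scheme \<Rightarrow> 'a tuple4 \<Rightarrow> 'a tuple4" where
  "pb12 G s = hb2 G (hb2 G s)"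
definition pb13 :: "('a, 'b) monoid_scheme \<Rightarrow> 'a tuple4 \<Rightarrow> 'a tuple4" where
  "pb13 G s = hb2 G (hb3 G (hb3 G (hb2inv G s)))"
definition pb14 :: "('a, 'b) monoid_scheme \<Rightarrow> 'a tuple4 \<Rightarrow> 'a tuple4" where
  "pb14 G s = hb2 G (hb3 G (hb4 G (hb4 G (hb3inv G (hb2inv G s)))))"
definition pb23 :: "('a, 'b) monoid_scheme \<Rightarrow> 'a tuple4 \<Rightarrow> 'a tuple4" where
  "pb23 G s = hb3 G (hb3 G s)"
definition pb24 :: "('a, 'b) monoid_scheme \<Rightarrow> 'a tuple4 \<Rightarrow> 'a tuple4" where
  "pb24 G s = hb3 G (hb4 G (hb4 G (hb3inv G s)))"
definition pb34 :: "('a, 'b) monoid_scheme \<Rightarrow> 'a tuple4 \<Rightarrow> 'a tuple4" where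
  "pb34 G s = hb4 G (hb4 G s)"

text \<open>The permutation induced on a set S of classes: [sigma] maps to [f sigma]
  (the image of the class of sigma under f is the class of f sigma, since f
  commutes with simultaneous conjugation). Extensional, as in BijGroup.\<close>

definition rho :: "'c set set \<Rightarrow> ('c \<Rightarrow> 'c) \<Rightarrow> 'c set \<Rightarrow> 'c set" where
  "rho S f = restrict (\<lambda>Y. f ` Y) S"

definition rho4_gens :: "('a, 'b) monoid_scheme \<Rightarrow> 'a set \<Rightarrow> 'a set \<Rightarrow> 'a set \<Rightarrow> 'a set
    \<Rightarrow> ('a tuple4 set \<Rightarrow> 'a tuple4 set) set" where
  "rho4_gens G C1 C2 C3 C4 = (let S = Sigma_i G C1 C2 C3 C4 in
     {rho S (pb12 G), rho S (pb13 G), rho S (pb14 G),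
      rho S (pb23 G), rho S (pb24 G), rho S (pb34 G)})"

definition rho4_image :: "('a, 'b) monoid_scheme \<Rightarrow> 'a set \<Rightarrow> 'a set \<Rightarrow> 'a set \<Rightarrow> 'a set
    \<Rightarrow> ('a tuple4 set \<Rightarrow> 'a tuple4 set) monoid" where
  "rho4_image G C1 C2 C3 C4 = (let S = Sigma_i G C1 C2 C3 C4 in
     (BijGroup S)\<lparr>carrier := generate (BijGroup S) (rho4_gens G C1 C2 C3 C4)\<rparr>)"

end

theory Submission
  imports Defs
begin


lemma klein_iso:
  fixes K (structure)
  assumes grp: "group K" and AB: "A \<in> carrier K" "B \<in> carrier K"
    and AA: "A \<otimes> A = \<one>" and BB: "B \<otimes> B = \<one>" and com: "B \<otimes> A = A \<otimes> B"
    and n1: "A \<noteq> \<one>" and n2: "B \<noteq> \<one>" and n3: "A \<otimes> B \<noteq> \<one>"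
  shows "K\<lparr>carrier := generate K {A, B, A \<otimes> B}\<rparr> \<cong> integer_mod_group 2 \<times>\<times> integer_mod_group 2"
proof -
  interpret group K by (rule grp)
  define H where "H = {\<one>, A, B, A \<otimes> B}"
  have t1: "A \<otimes> (A \<otimes> B) = B" using AB AA by (simp add: m_assoc[symmetric])
  have t2: "B \<otimes> (A \<otimes> B) = A" using AB BB com by (metis m_assoc r_one)
  have t3: "(A \<otimes> B) \<otimes> A = B" using AB AA com by (metis m_assoc r_one)
  have t4: "(A \<otimes> B) \<otimes> B = A" using AB BB by (simp add: m_assoc)
  have t5: "(A \<otimes> B) \<otimes> (A \<otimes> B) = \<one>" using AB t3 BB by (simp add: m_assoc[symmetric])
  have iA: "inv A = A" using AA AB inv_equality by blast
  have iB: "inv B = B" using BB AB inv_equality by blast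
  have iAB: "inv (A \<otimes> B) = A \<otimes> B" using t5 AB inv_equality by blast
  have d1: "A \<noteq> B" using n3 BB by auto
  have d2: "A \<noteq> A \<otimes> B" using n2 t1 AA AB by (metis r_one)
  have d3: "B \<noteq> A \<otimes> B" using n1 t4 BB AB by (metis l_one)
  note tab = AA BB com t1 t2 t3 t4 t5 iA iB iAB
  have sub: "subgroup H K"
    by (rule subgroupI) (use AB tab in \<open>auto simp: H_def\<close>)
  have gen: "generate K {A, B, A \<otimes> B} = H"
  proof
    show "generate K {A, B, A \<otimes> B} \<subseteq> H"
      by (rule generate_subgroup_incl[OF _ sub]) (auto simp: H_def)
    show "H \<subseteq> generate K {A, B, A \<otimes> B}"
      unfolding H_def by (auto intro: generate.intros)
  qed
  define psi where "psi Z = (((if Z = A \<or> Z = A \<otimes> B then 1 else 0) :: int),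
                             ((if Z = B \<or> Z = A \<otimes> B then 1 else 0) :: int))" for Z
  have "psi \<in> iso (K\<lparr>carrier := H\<rparr>) (integer_mod_group 2 \<times>\<times> integer_mod_group 2)"
  proof -
    have hom: "psi \<in> hom (K\<lparr>carrier := H\<rparr>) (integer_mod_group 2 \<times>\<times> integer_mod_group 2)"
      unfolding hom_def using AB tab n1 n2 n3 d1 d2 d3
      by (auto simp: H_def psi_def carrier_integer_mod_group)
    have "bij_betw psi H ({0..<2} \<times> {0..<2})"
      unfolding bij_betw_def inj_on_def
    proof (intro conjI ballI impI)
      show "x = y" if "x \<in> H" "y \<in> H" "psi x = psi y" for x y
        using that n1 n2 n3 d1 d2 d3 by (auto simp: H_def psi_def)
      show "psi ` H = {0..<2} \<times> {0..<2}"
      proof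
        show "psi ` H \<subseteq> {0..<2} \<times> {0..<2}" by (auto simp: H_def psi_def)
        have "{0..<2::int} = {0,1}" by auto
        then show "{0..<2} \<times> {0..<2} \<subseteq> psi ` H"
          using n1 n2 n3 d1 d2 d3 unfolding H_def psi_def
          by (auto simp: image_iff)
      qed
    qed
    then show ?thesis using hom by (simp add: iso_def carrier_integer_mod_group)
  qed
  then show ?thesis unfolding is_iso_def gen by blast
qed



fun hb4inv :: "('a, 'b) monoid_scheme \<Rightarrow> 'a tuple4 \<Rightarrow> 'a tuple4" where
  "hb4inv G (a, b, c, d) = (a, b, d, inv\<^bsub>G\<^esub> d \<otimes>\<^bsub>G\<^esub> c \<otimes>\<^bsub>G\<^esub> d)"

definition pbi12 where "pbi12 G s = hb2inv G (hb2inv G s)"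
definition pbi13 where "pbi13 G s = hb2 G (hb3inv G (hb3inv G (hb2inv G s)))"
definition pbi14 where "pbi14 G s = hb2 G (hb3 G (hb4inv G (hb4inv G (hb3inv G (hb2inv G s)))))"

context group begin

lemma cancel1: "x \<in> carrier G \<Longrightarrow> y \<in> carrier G \<Longrightarrow> x \<otimes> (inv x \<otimes> y) = y"
  by (simp add: m_assoc[symmetric])
lemma cancel2: "x \<in> carrier G \<Longrightarrow> y \<in> carrier G \<Longrightarrow> inv x \<otimes> (x \<otimes> y) = y"
  by (simp add: m_assoc[symmetric])

lemmas gs = m_assoc inv_mult_group cancel1 cancel2

definition tc :: "'a tuple4 \<Rightarrow> bool" where
  "tc s = (case s of (a,b,c,d) \<Rightarrow> a \<in> carrier G \<and> b \<in> carrier G \<and> c \<in> carrier G \<and> d \<in> carrier G)"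

definition cc :: "'a set \<Rightarrow> bool" where
  "cc C = (C \<subseteq> carrier G \<and> (\<forall>h\<in>carrier G. \<forall>x\<in>C. h \<otimes> x \<otimes> inv h \<in> C))"

lemma ntc_cc: "nontrivial_conj_class G C \<Longrightarrow> cc C"
  unfolding nontrivial_conj_class_def is_conj_class_def conj_class_def cc_def
proof (elim conjE bexE, intro conjI ballI)
  fix g assume g: "g \<in> carrier G" and C: "C = (\<lambda>h. h \<otimes> g \<otimes> inv h) ` carrier G"
  show "C \<subseteq> carrier G" using C g by auto
  fix h x assume h: "h \<in> carrier G" and x: "x \<in> C"
  then obtain k where k: "k \<in> carrier G" "x = k \<otimes> g \<otimes> inv k" using C by auto
  have "h \<otimes> x \<otimes> inv h = (h \<otimes> k) \<otimes> g \<otimes> inv (h \<otimes> k)" using k h g by (simp add: gs)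
  then show "h \<otimes> x \<otimes> inv h \<in> C" using C h k by auto
qed

lemma Ni_iff: "(a,b,c,d) \<in> Ni G C1 C2 C3 C4 \<longleftrightarrow> a \<in> C1 \<and> b \<in> C2 \<and> c \<in> C3 \<and> d \<in> C4 \<and>
      a \<otimes> b \<otimes> c \<otimes> d = \<one> \<and> generate G {a, b, c, d} = carrier G"
  by (simp add: Ni_def)

lemma gen_eq:
  assumes "U \<subseteq> carrier G" "V \<subseteq> carrier G" "U \<subseteq> generate G V" "V \<subseteq> generate G U"
  shows "generate G U = generate G V"
  using generate_subgroup_incl[OF _ generate_is_subgroup] assms by (metis subset_antisym)

lemma gin: "x \<in> V \<Longrightarrow> x \<in> generate G V"
  by (rule generate.incl)
lemma gm: "x \<in> generate G V \<Longrightarrow> y \<in> generate G V \<Longrightarrow> x \<otimes> y \<in> generate G V"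
  by (rule generate.eng)
lemma gi: "V \<subseteq> carrier G \<Longrightarrow> x \<in> generate G V \<Longrightarrow> inv x \<in> generate G V"
  using subgroup.m_inv_closed[OF generate_is_subgroup] by blast

lemma hb2_Ni:
  assumes s: "s \<in> Ni G C1 C2 C3 C4" and cc: "cc C1" "cc C2" "cc C3" "cc C4"
  shows "hb2 G s \<in> Ni G C2 C1 C3 C4"
proof -
  obtain a b c d where sd: "s = (a,b,c,d)" by (cases s) auto
  have m: "a \<in> C1" "b \<in> C2" "c \<in> C3" "d \<in> C4" and p: "a \<otimes> b \<otimes> c \<otimes> d = \<one>"
    and g: "generate G {a, b, c, d} = carrier G" using s sd Ni_iff by auto
  have cr: "a \<in> carrier G" "b \<in> carrier G" "c \<in> carrier G" "d \<in> carrier G"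
    using m cc unfolding cc_def by auto
  have "generate G {a \<otimes> b \<otimes> inv a, a, c, d} = generate G {a, b, c, d}"
  proof (rule gen_eq)
    show "{a \<otimes> b \<otimes> inv a, a, c, d} \<subseteq> generate G {a, b, c, d}"
      using cr by (simp add: gm gi gin)
    have "inv a \<otimes> (a \<otimes> b \<otimes> inv a) \<otimes> a \<in> generate G {a \<otimes> b \<otimes> inv a, a, c, d}"
      using cr by (simp add: gm gi gin)
    then show "{a, b, c, d} \<subseteq> generate G {a \<otimes> b \<otimes> inv a, a, c, d}"
      using cr by (simp add: gin gs)
  qed (use cr in simp_all)
  moreover have "a \<otimes> b \<otimes> inv a \<in> C2" using cc(2) cr m unfolding cc_def by auto
  moreover have "a \<otimes> b \<otimes> inv a \<otimes> a \<otimes> c \<otimes> d = \<one>" using p cr by (simp add: gs)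
  ultimately show ?thesis using sd m g by (simp add: Ni_iff)
qed

lemma hb3_Ni:
  assumes s: "s \<in> Ni G C1 C2 C3 C4" and cc: "cc C1" "cc C2" "cc C3" "cc C4"
  shows "hb3 G s \<in> Ni G C1 C3 C2 C4"
proof -
  obtain a b c d where sd: "s = (a,b,c,d)" by (cases s) auto
  have m: "a \<in> C1" "b \<in> C2" "c \<in> C3" "d \<in> C4" and p: "a \<otimes> b \<otimes> c \<otimes> d = \<one>"
    and g: "generate G {a, b, c, d} = carrier G" using s sd Ni_iff by auto
  have cr: "a \<in> carrier G" "b \<in> carrier G" "c \<in> carrier G" "d \<in> carrier G"
    using m cc unfolding cc_def by auto
  have "generate G {a, b \<otimes> c \<otimes> inv b, b, d} = generate G {a, b, c, d}"
  proof (rule gen_eq)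
    show "{a, b \<otimes> c \<otimes> inv b, b, d} \<subseteq> generate G {a, b, c, d}"
      using cr by (simp add: gm gi gin)
    have "inv b \<otimes> (b \<otimes> c \<otimes> inv b) \<otimes> b \<in> generate G {a, b \<otimes> c \<otimes> inv b, b, d}"
      using cr by (simp add: gm gi gin)
    then show "{a, b, c, d} \<subseteq> generate G {a, b \<otimes> c \<otimes> inv b, b, d}"
      using cr by (simp add: gin gs)
  qed (use cr in simp_all)
  moreover have "b \<otimes> c \<otimes> inv b \<in> C3" using cc(3) cr m unfolding cc_def by auto
  moreover have "a \<otimes> (b \<otimes> c \<otimes> inv b) \<otimes> b \<otimes> d = \<one>" using p cr by (simp add: gs)
  ultimately show ?thesis using sd m g by (simp add: Ni_iff)
qed

lemma hb4_Ni:
  assumes s: "s \<in> Ni G C1 C2 C3 C4" and cc: "cc C1" "cc C2" "cc C3" "cc C4"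
  shows "hb4 G s \<in> Ni G C1 C2 C4 C3"
proof -
  obtain a b c d where sd: "s = (a,b,c,d)" by (cases s) auto
  have m: "a \<in> C1" "b \<in> C2" "c \<in> C3" "d \<in> C4" and p: "a \<otimes> b \<otimes> c \<otimes> d = \<one>"
    and g: "generate G {a, b, c, d} = carrier G" using s sd Ni_iff by auto
  have cr: "a \<in> carrier G" "b \<in> carrier G" "c \<in> carrier G" "d \<in> carrier G"
    using m cc unfolding cc_def by auto
  have "generate G {a, b, c \<otimes> d \<otimes> inv c, c} = generate G {a, b, c, d}"
  proof (rule gen_eq)
    show "{a, b, c \<otimes> d \<otimes> inv c, c} \<subseteq> generate G {a, b, c, d}"
      using cr by (simp add: gm gi gin)
    have "inv c \<otimes> (c \<otimes> d \<otimes> inv c) \<otimes> c \<in> generate G {a, b, c \<otimes> d \<otimes> inv c, c}"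
      using cr by (simp add: gm gi gin)
    then show "{a, b, c, d} \<subseteq> generate G {a, b, c \<otimes> d \<otimes> inv c, c}"
      using cr by (simp add: gin gs)
  qed (use cr in simp_all)
  moreover have "c \<otimes> d \<otimes> inv c \<in> C4" using cc(4) cr m unfolding cc_def by auto
  moreover have "a \<otimes> b \<otimes> (c \<otimes> d \<otimes> inv c) \<otimes> c = \<one>" using p cr by (simp add: gs)
  ultimately show ?thesis using sd m g by (simp add: Ni_iff)
qed

lemma hb2inv_Ni:
  assumes s: "s \<in> Ni G C1 C2 C3 C4" and cc: "cc C1" "cc C2" "cc C3" "cc C4"
  shows "hb2inv G s \<in> Ni G C2 C1 C3 C4"
proof -
  obtain a b c d where sd: "s = (a,b,c,d)" by (cases s) auto
  have m: "a \<in> C1" "b \<in> C2" "c \<in> C3" "d \<in> C4" and p: "a \<otimes> b \<otimes> c \<otimes> d = \<one>"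
    and g: "generate G {a, b, c, d} = carrier G" using s sd Ni_iff by auto
  have cr: "a \<in> carrier G" "b \<in> carrier G" "c \<in> carrier G" "d \<in> carrier G"
    using m cc unfolding cc_def by auto
  have "generate G {b, inv b \<otimes> a \<otimes> b, c, d} = generate G {a, b, c, d}"
  proof (rule gen_eq)
    show "{b, inv b \<otimes> a \<otimes> b, c, d} \<subseteq> generate G {a, b, c, d}"
      using cr by (simp add: gm gi gin)
    have "b \<otimes> (inv b \<otimes> a \<otimes> b) \<otimes> inv b \<in> generate G {b, inv b \<otimes> a \<otimes> b, c, d}"
      using cr by (simp add: gm gi gin)
    then show "{a, b, c, d} \<subseteq> generate G {b, inv b \<otimes> a \<otimes> b, c, d}"
      using cr by (simp add: gin gs)
  qed (use cr in simp_all)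
  moreover have "inv b \<otimes> a \<otimes> b \<in> C1" using cc(1) cr m unfolding cc_def by (metis inv_closed inv_inv)
  moreover have "b \<otimes> (inv b \<otimes> a \<otimes> b) \<otimes> c \<otimes> d = \<one>" using p cr by (simp add: gs)
  ultimately show ?thesis using sd m g by (simp add: Ni_iff)
qed

lemma hb3inv_Ni:
  assumes s: "s \<in> Ni G C1 C2 C3 C4" and cc: "cc C1" "cc C2" "cc C3" "cc C4"
  shows "hb3inv G s \<in> Ni G C1 C3 C2 C4"
proof -
  obtain a b c d where sd: "s = (a,b,c,d)" by (cases s) auto
  have m: "a \<in> C1" "b \<in> C2" "c \<in> C3" "d \<in> C4" and p: "a \<otimes> b \<otimes> c \<otimes> d = \<one>"
    and g: "generate G {a, b, c, d} = carrier G" using s sd Ni_iff by auto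
  have cr: "a \<in> carrier G" "b \<in> carrier G" "c \<in> carrier G" "d \<in> carrier G"
    using m cc unfolding cc_def by auto
  have "generate G {a, c, inv c \<otimes> b \<otimes> c, d} = generate G {a, b, c, d}"
  proof (rule gen_eq)
    show "{a, c, inv c \<otimes> b \<otimes> c, d} \<subseteq> generate G {a, b, c, d}"
      using cr by (simp add: gm gi gin)
    have "c \<otimes> (inv c \<otimes> b \<otimes> c) \<otimes> inv c \<in> generate G {a, c, inv c \<otimes> b \<otimes> c, d}"
      using cr by (simp add: gm gi gin)
    then show "{a, b, c, d} \<subseteq> generate G {a, c, inv c \<otimes> b \<otimes> c, d}"
      using cr by (simp add: gin gs)
  qed (use cr in simp_all)
  moreover have "inv c \<otimes> b \<otimes> c \<in> C2" using cc(2) cr m unfolding cc_def by (metis inv_closed inv_inv)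
  moreover have "a \<otimes> c \<otimes> (inv c \<otimes> b \<otimes> c) \<otimes> d = \<one>" using p cr by (simp add: gs)
  ultimately show ?thesis using sd m g by (simp add: Ni_iff)
qed

lemma hb4inv_Ni:
  assumes s: "s \<in> Ni G C1 C2 C3 C4" and cc: "cc C1" "cc C2" "cc C3" "cc C4"
  shows "hb4inv G s \<in> Ni G C1 C2 C4 C3"
proof -
  obtain a b c d where sd: "s = (a,b,c,d)" by (cases s) auto
  have m: "a \<in> C1" "b \<in> C2" "c \<in> C3" "d \<in> C4" and p: "a \<otimes> b \<otimes> c \<otimes> d = \<one>"
    and g: "generate G {a, b, c, d} = carrier G" using s sd Ni_iff by auto
  have cr: "a \<in> carrier G" "b \<in> carrier G" "c \<in> carrier G" "d \<in> carrier G"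
    using m cc unfolding cc_def by auto
  have "generate G {a, b, d, inv d \<otimes> c \<otimes> d} = generate G {a, b, c, d}"
  proof (rule gen_eq)
    show "{a, b, d, inv d \<otimes> c \<otimes> d} \<subseteq> generate G {a, b, c, d}"
      using cr by (simp add: gm gi gin)
    have "d \<otimes> (inv d \<otimes> c \<otimes> d) \<otimes> inv d \<in> generate G {a, b, d, inv d \<otimes> c \<otimes> d}"
      using cr by (simp add: gm gi gin)
    then show "{a, b, c, d} \<subseteq> generate G {a, b, d, inv d \<otimes> c \<otimes> d}"
      using cr by (simp add: gin gs)
  qed (use cr in simp_all)
  moreover have "inv d \<otimes> c \<otimes> d \<in> C3" using cc(3) cr m unfolding cc_def by (metis inv_closed inv_inv)
  moreover have "a \<otimes> b \<otimes> d \<otimes> (inv d \<otimes> c \<otimes> d) = \<one>" using p cr by (simp add: gs)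
  ultimately show ?thesis using sd m g by (simp add: Ni_iff)
qed

lemmas hbN = hb2_Ni hb3_Ni hb4_Ni hb2inv_Ni hb3inv_Ni hb4inv_Ni

context
  fixes C1 C2 C3 C4 assumes cc: "cc C1" "cc C2" "cc C3" "cc C4"
begin
lemma pbN:
  assumes "s \<in> Ni G C1 C2 C3 C4"
  shows "pb12 G s \<in> Ni G C1 C2 C3 C4" "pb13 G s \<in> Ni G C1 C2 C3 C4" "pb14 G s \<in> Ni G C1 C2 C3 C4"
    "pb23 G s \<in> Ni G C1 C2 C3 C4" "pb24 G s \<in> Ni G C1 C2 C3 C4" "pb34 G s \<in> Ni G C1 C2 C3 C4"
    "pbi12 G s \<in> Ni G C1 C2 C3 C4" "pbi13 G s \<in> Ni G C1 C2 C3 C4" "pbi14 G s \<in> Ni G C1 C2 C3 C4"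
  unfolding pb12_def pb13_def pb14_def pb23_def pb24_def pb34_def pbi12_def pbi13_def pbi14_def
  using assms cc by (intro hbN; simp)+

lemma Ni_tc: "s \<in> Ni G C1 C2 C3 C4 \<Longrightarrow> tc s"
  using cc unfolding cc_def tc_def Ni_def by auto
end

end


context group begin

lemma tuple_cases: "tc s \<Longrightarrow> (\<And>a b c d. s = (a,b,c,d) \<Longrightarrow> a \<in> carrier G \<Longrightarrow> b \<in> carrier G
   \<Longrightarrow> c \<in> carrier G \<Longrightarrow> d \<in> carrier G \<Longrightarrow> P) \<Longrightarrow> P"
  by (cases s) (auto simp: tc_def)

lemma comm_pb12: "tc s \<Longrightarrow> h \<in> carrier G \<Longrightarrow> pb12 G (tconj G h s) = tconj G h (pb12 G s)"
  by (erule tuple_cases) (simp add: pb12_def gs)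

lemma comm_pb13: "tc s \<Longrightarrow> h \<in> carrier G \<Longrightarrow> pb13 G (tconj G h s) = tconj G h (pb13 G s)"
  by (erule tuple_cases) (simp add: pb13_def gs)

lemma comm_pb14: "tc s \<Longrightarrow> h \<in> carrier G \<Longrightarrow> pb14 G (tconj G h s) = tconj G h (pb14 G s)"
  by (erule tuple_cases) (simp add: pb14_def gs)

lemma comm_pb23: "tc s \<Longrightarrow> h \<in> carrier G \<Longrightarrow> pb23 G (tconj G h s) = tconj G h (pb23 G s)"
  by (erule tuple_cases) (simp add: pb23_def gs)

lemma comm_pb24: "tc s \<Longrightarrow> h \<in> carrier G \<Longrightarrow> pb24 G (tconj G h s) = tconj G h (pb24 G s)"
  by (erule tuple_cases) (simp add: pb24_def gs)

lemma comm_pb34: "tc s \<Longrightarrow> h \<in> carrier G \<Longrightarrow> pb34 G (tconj G h s) = tconj G h (pb34 G s)"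
  by (erule tuple_cases) (simp add: pb34_def gs)

lemma comm_pbi12: "tc s \<Longrightarrow> h \<in> carrier G \<Longrightarrow> pbi12 G (tconj G h s) = tconj G h (pbi12 G s)"
  by (erule tuple_cases) (simp add: pbi12_def gs)

lemma comm_pbi13: "tc s \<Longrightarrow> h \<in> carrier G \<Longrightarrow> pbi13 G (tconj G h s) = tconj G h (pbi13 G s)"
  by (erule tuple_cases) (simp add: pbi13_def gs)

lemma comm_pbi14: "tc s \<Longrightarrow> h \<in> carrier G \<Longrightarrow> pbi14 G (tconj G h s) = tconj G h (pbi14 G s)"
  by (erule tuple_cases) (simp add: pbi14_def gs)

lemma inv1_12: "tc s \<Longrightarrow> pbi12 G (pb12 G s) = s"
  by (erule tuple_cases) (simp add: pb12_def pbi12_def gs)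
lemma inv2_12: "tc s \<Longrightarrow> pb12 G (pbi12 G s) = s"
  by (erule tuple_cases) (simp add: pb12_def pbi12_def gs)

lemma inv1_13: "tc s \<Longrightarrow> pbi13 G (pb13 G s) = s"
  by (erule tuple_cases) (simp add: pb13_def pbi13_def gs)
lemma inv2_13: "tc s \<Longrightarrow> pb13 G (pbi13 G s) = s"
  by (erule tuple_cases) (simp add: pb13_def pbi13_def gs)

lemma inv1_14: "tc s \<Longrightarrow> pbi14 G (pb14 G s) = s"
  by (erule tuple_cases) (simp add: pb14_def pbi14_def gs)
lemma inv2_14: "tc s \<Longrightarrow> pb14 G (pbi14 G s) = s"
  by (erule tuple_cases) (simp add: pb14_def pbi14_def gs)

lemma rel34: "\<lbrakk>a \<in> carrier G; b \<in> carrier G; c \<in> carrier G\<rbrakk> \<Longrightarrow>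
  pb34 G (a,b,c,inv (a \<otimes> b \<otimes> c)) = tconj G (inv (a \<otimes> b)) (pb12 G (a,b,c,inv (a \<otimes> b \<otimes> c)))"
  by (simp add: pb12_def pb34_def gs)
lemma rel23: "\<lbrakk>a \<in> carrier G; b \<in> carrier G; c \<in> carrier G\<rbrakk> \<Longrightarrow>
  pb23 G (a,b,c,inv (a \<otimes> b \<otimes> c)) = tconj G (b \<otimes> c) (pb14 G (a,b,c,inv (a \<otimes> b \<otimes> c)))"
  by (simp add: pb14_def pb23_def gs)
lemma rel24: "\<lbrakk>a \<in> carrier G; b \<in> carrier G; c \<in> carrier G\<rbrakk> \<Longrightarrow>
  pb12 G (pb24 G (a,b,c,inv (a \<otimes> b \<otimes> c))) = tconj G (inv c \<otimes> inv a) (pb13 G (pb12 G (a,b,c,inv (a \<otimes> b \<otimes> c))))"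
  by (simp add: pb12_def pb13_def pb24_def gs)
lemma relC: "\<lbrakk>a \<in> carrier G; b \<in> carrier G; c \<in> carrier G\<rbrakk> \<Longrightarrow>
  pb14 G (pb13 G (pb12 G (a,b,c,inv (a \<otimes> b \<otimes> c)))) = tconj G a (a,b,c,inv (a \<otimes> b \<otimes> c))"
  by (simp add: pb12_def pb13_def pb14_def gs)


lemma tconj_tc: "tc s \<Longrightarrow> h \<in> carrier G \<Longrightarrow> tc (tconj G h s)"
  by (erule tuple_cases) (simp add: tc_def)

lemma tclass_conj:
  assumes "tc t" "h \<in> carrier G"
  shows "tclass G (tconj G h t) = tclass G t"
proof -
  have tt: "tconj G k (tconj G h t) = tconj G (k \<otimes> h) t" if "k \<in> carrier G" for k
    using assms(1) by (rule tuple_cases) (use that assms in \<open>simp add: gs\<close>)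
  show ?thesis unfolding tclass_def
  proof (intro equalityI subsetI)
    fix x assume "x \<in> (\<lambda>k. tconj G k (tconj G h t)) ` carrier G"
    then obtain k where "k \<in> carrier G" "x = tconj G k (tconj G h t)" by auto
    then show "x \<in> (\<lambda>k. tconj G k t) ` carrier G" using tt assms by auto
  next
    fix x assume "x \<in> (\<lambda>k. tconj G k t) ` carrier G"
    then obtain k where k: "k \<in> carrier G" "x = tconj G k t" by auto
    then have "x = tconj G (k \<otimes> inv h) (tconj G h t)" using tt assms
      by (simp add: m_assoc)
    then show "x \<in> (\<lambda>k. tconj G k (tconj G h t)) ` carrier G" using k assms by auto
  qed
qed

lemma img_tclass:
  assumes "\<And>h. h \<in> carrier G \<Longrightarrow> f (tconj G h s) = tconj G h (f s)"
  shows "f ` tclass G s = tclass G (f s)"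
  unfolding tclass_def image_image using assms by auto

lemma Ni_split:
  assumes "s \<in> Ni G C1 C2 C3 C4" "cc C1" "cc C2" "cc C3" "cc C4"
  obtains a b c where "a \<in> carrier G" "b \<in> carrier G" "c \<in> carrier G" "s = (a,b,c,inv (a \<otimes> b \<otimes> c))"
proof -
  obtain a b c d where sd: "s = (a,b,c,d)" by (cases s) auto
  have m: "a \<in> C1" "b \<in> C2" "c \<in> C3" "d \<in> C4" and p: "a \<otimes> b \<otimes> c \<otimes> d = \<one>"
    using assms sd Ni_iff by auto
  have cr: "a \<in> carrier G" "b \<in> carrier G" "c \<in> carrier G" "d \<in> carrier G"
    using m assms unfolding cc_def by auto
  have "inv (a \<otimes> b \<otimes> c) \<otimes> (a \<otimes> b \<otimes> c \<otimes> d) = d" using cr by (simp add: gs)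
  then have "d = inv (a \<otimes> b \<otimes> c)" using p cr by simp
  then show ?thesis using that sd cr by blast
qed

end

lemma rho_app: "Y \<in> S \<Longrightarrow> rho S f Y = f ` Y"
  by (simp add: rho_def)

lemma bg_mult: "x \<in> Bij S \<Longrightarrow> y \<in> Bij S \<Longrightarrow> x \<otimes>\<^bsub>BijGroup S\<^esub> y = compose S x y"
  by (simp add: BijGroup_def)
lemma bg_one: "\<one>\<^bsub>BijGroup S\<^esub> = (\<lambda>x\<in>S. x)"
  by (simp add: BijGroup_def)
lemma bg_carrier: "carrier (BijGroup S) = Bij S"
  by (simp add: BijGroup_def)



lemma ord2:
  fixes K (structure)
  assumes "group K" "x \<in> carrier K" "group.ord K x = 2"
  shows "x \<otimes> x = \<one>" "x \<noteq> \<one>"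
proof -
  interpret group K by (rule assms(1))
  have "x [^] (2::nat) = \<one>" using pow_eq_id[OF assms(2)] assms(3) by simp
  then show "x \<otimes> x = \<one>" using assms(2) by (simp add: numeral_2_eq_2)
  have "x [^] (1::nat) \<noteq> \<one>" using pow_eq_id[OF assms(2), of 1] assms(2,3) by simp
  then show "x \<noteq> \<one>" using assms(2) by simp
qed

lemma alg:
  fixes K (structure)
  assumes "group K" "A \<in> carrier K" "B \<in> carrier K" "C \<in> carrier K"
    "A \<otimes> A = \<one>" "B \<otimes> B = \<one>" "C \<otimes> C = \<one>" "C \<otimes> (B \<otimes> A) = \<one>"
  shows "C = A \<otimes> B" "B \<otimes> A = A \<otimes> B"
proof -
  interpret group K by (rule assms(1))
  have iA: "inv A = A" using assms inv_equality by blast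
  have iB: "inv B = B" using assms inv_equality by blast
  have "inv (B \<otimes> A) = C" using assms inv_equality by (meson m_closed)
  then show C: "C = A \<otimes> B" using assms iA iB by (simp add: inv_mult_group)
  have "inv C = C" using assms inv_equality by blast
  then show "B \<otimes> A = A \<otimes> B" using C assms iA iB by (simp add: inv_mult_group)
qed

lemma rho_ext: "rho S f \<in> extensional S"
  by (simp add: rho_def)



theorem corollary3:
  fixes G :: "('a, 'b) monoid_scheme" and C1 C2 C3 C4 :: "'a set"
  assumes "group G" and "finite (carrier G)"
    and "nontrivial_conj_class G C1" and "nontrivial_conj_class G C2"
    and "nontrivial_conj_class G C3" and "nontrivial_conj_class G C4"
    and "group.ord (BijGroup (Sigma_i G C1 C2 C3 C4)) (rho (Sigma_i G C1 C2 C3 C4) (pb12 G)) = 2"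
    and "group.ord (BijGroup (Sigma_i G C1 C2 C3 C4)) (rho (Sigma_i G C1 C2 C3 C4) (pb13 G)) = 2"
    and "group.ord (BijGroup (Sigma_i G C1 C2 C3 C4)) (rho (Sigma_i G C1 C2 C3 C4) (pb14 G)) = 2"
  shows "rho4_image G C1 C2 C3 C4 \<cong> integer_mod_group 2 \<times>\<times> integer_mod_group 2"
proof -
  interpret group G by (rule assms(1))
  have cc: "cc C1" "cc C2" "cc C3" "cc C4" using ntc_cc assms(3-6) by auto
  define N where "N = Ni G C1 C2 C3 C4"
  define S where "S = Sigma_i G C1 C2 C3 C4"
  have S_eq: "S = tclass G ` N" by (simp add: S_def N_def Sigma_i_def)
  note pN = pbN[OF cc, folded N_def]
  have tcN: "\<And>s. s \<in> N \<Longrightarrow> tc s" using Ni_tc[OF cc] N_def by blast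
  have rc: "rho S f (tclass G s) = tclass G (f s)"
    if cm: "\<And>t h. tc t \<Longrightarrow> h \<in> carrier G \<Longrightarrow> f (tconj G h t) = tconj G h (f t)"
      and s: "s \<in> N" for f s
  proof -
    have "tclass G s \<in> S" using s S_eq by auto
    then have "rho S f (tclass G s) = f ` tclass G s" by (rule rho_app)
    also have "\<dots> = tclass G (f s)" using cm tcN[OF s] by (intro img_tclass) auto
    finally show ?thesis .
  qed
  have bij: "rho S f \<in> Bij S"
    if fN: "\<And>s. s \<in> N \<Longrightarrow> f s \<in> N" and gN: "\<And>s. s \<in> N \<Longrightarrow> g s \<in> N"
      and fc: "\<And>t h. tc t \<Longrightarrow> h \<in> carrier G \<Longrightarrow> f (tconj G h t) = tconj G h (f t)"
      and gc: "\<And>t h. tc t \<Longrightarrow> h \<in> carrier G \<Longrightarrow> g (tconj G h t) = tconj G h (g t)"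
      and gf: "\<And>s. tc s \<Longrightarrow> g (f s) = s" and fg: "\<And>s. tc s \<Longrightarrow> f (g s) = s" for f g
  proof -
    have "bij_betw (rho S f) S S"
    proof (rule bij_betw_byWitness[where f'="rho S g"])
      show "\<forall>Y\<in>S. rho S g (rho S f Y) = Y"
        using S_eq rc[OF fc] rc[OF gc] fN gf tcN by auto
      show "\<forall>Y\<in>S. rho S f (rho S g Y) = Y"
        using S_eq rc[OF fc] rc[OF gc] gN fg tcN by auto
      show "rho S f ` S \<subseteq> S"
        using S_eq rc[OF fc] fN by auto
      show "rho S g ` S \<subseteq> S"
        using S_eq rc[OF gc] gN by auto
    qed
    then show ?thesis unfolding Bij_def using rho_ext by auto
  qed
  define A where "A = rho S (pb12 G)"
  define B where "B = rho S (pb13 G)"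
  define C where "C = rho S (pb14 G)"
  define D23 where "D23 = rho S (pb23 G)"
  define D24 where "D24 = rho S (pb24 G)"
  define D34 where "D34 = rho S (pb34 G)"
  have AB: "A \<in> Bij S" unfolding A_def
    by (rule bij[where g="pbi12 G"]) (auto simp: pN comm_pb12 comm_pbi12 inv1_12 inv2_12)
  have BB: "B \<in> Bij S" unfolding B_def
    by (rule bij[where g="pbi13 G"]) (auto simp: pN comm_pb13 comm_pbi13 inv1_13 inv2_13)
  have CB: "C \<in> Bij S" unfolding C_def
    by (rule bij[where g="pbi14 G"]) (auto simp: pN comm_pb14 comm_pbi14 inv1_14 inv2_14)
  interpret K: group "BijGroup S" by (rule group_BijGroup)
  have AK: "A \<in> carrier (BijGroup S)" and BK: "B \<in> carrier (BijGroup S)"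
    and CK: "C \<in> carrier (BijGroup S)" using AB BB CB by (auto simp: bg_carrier)
  have oA: "A \<otimes>\<^bsub>BijGroup S\<^esub> A = \<one>\<^bsub>BijGroup S\<^esub>" "A \<noteq> \<one>\<^bsub>BijGroup S\<^esub>"
    using ord2[OF group_BijGroup AK] assms(7) by (auto simp: A_def S_def)
  have oB: "B \<otimes>\<^bsub>BijGroup S\<^esub> B = \<one>\<^bsub>BijGroup S\<^esub>" "B \<noteq> \<one>\<^bsub>BijGroup S\<^esub>"
    using ord2[OF group_BijGroup BK] assms(8) by (auto simp: B_def S_def)
  have oC: "C \<otimes>\<^bsub>BijGroup S\<^esub> C = \<one>\<^bsub>BijGroup S\<^esub>" "C \<noteq> \<one>\<^bsub>BijGroup S\<^esub>"
    using ord2[OF group_BijGroup CK] assms(9) by (auto simp: C_def S_def)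
  have AA: "A (A Y) = Y" if "Y \<in> S" for Y
  proof -
    have "compose S A A = (\<lambda>x\<in>S. x)" using oA(1) AB by (simp add: bg_mult bg_one)
    then have "compose S A A Y = Y" using that by simp
    then show ?thesis using that by (simp add: compose_eq)
  qed
  have cls: "P" if YS: "Y \<in> S" and HP: "\<And>a b c. a \<in> carrier G \<Longrightarrow> b \<in> carrier G \<Longrightarrow> c \<in> carrier G \<Longrightarrow>
      (a,b,c,inv\<^bsub>G\<^esub> (a \<otimes>\<^bsub>G\<^esub> b \<otimes>\<^bsub>G\<^esub> c)) \<in> N \<Longrightarrow> Y = tclass G (a,b,c,inv\<^bsub>G\<^esub> (a \<otimes>\<^bsub>G\<^esub> b \<otimes>\<^bsub>G\<^esub> c)) \<Longrightarrow> P" for Y P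
  proof -
    obtain s where s: "s \<in> N" "Y = tclass G s" using YS S_eq by auto
    then obtain a b c where "a \<in> carrier G" "b \<in> carrier G" "c \<in> carrier G" "s = (a,b,c,inv\<^bsub>G\<^esub> (a \<otimes>\<^bsub>G\<^esub> b \<otimes>\<^bsub>G\<^esub> c))"
      using Ni_split[OF _ cc] N_def by metis
    then show ?thesis using HP s by blast
  qed
  have tcp: "tc (f s)" if "s \<in> N" "\<And>s. s \<in> N \<Longrightarrow> f s \<in> N" for f s
    using that tcN by blast
  note rcs = rc[OF comm_pb12] rc[OF comm_pb13] rc[OF comm_pb14] rc[OF comm_pb23] rc[OF comm_pb24] rc[OF comm_pb34]
  have R34: "D34 = A" unfolding D34_def A_def
  proof (rule extensionalityI[OF rho_ext rho_ext])
    fix Y assume "Y \<in> S"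
    then show "rho S (pb34 G) Y = rho S (pb12 G) Y"
    proof (rule cls)
      fix a b c assume abc: "a \<in> carrier G" "b \<in> carrier G" "c \<in> carrier G"
        and sN: "(a,b,c,inv\<^bsub>G\<^esub> (a \<otimes>\<^bsub>G\<^esub> b \<otimes>\<^bsub>G\<^esub> c)) \<in> N" and Y: "Y = tclass G (a,b,c,inv\<^bsub>G\<^esub> (a \<otimes>\<^bsub>G\<^esub> b \<otimes>\<^bsub>G\<^esub> c))"
      show "rho S (pb34 G) Y = rho S (pb12 G) Y"
        using Y sN abc rcs rel34 tclass_conj tcp pN by simp
    qed
  qed
  have R23: "D23 = C" unfolding D23_def C_def
  proof (rule extensionalityI[OF rho_ext rho_ext])
    fix Y assume "Y \<in> S"
    then show "rho S (pb23 G) Y = rho S (pb14 G) Y"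
    proof (rule cls)
      fix a b c assume abc: "a \<in> carrier G" "b \<in> carrier G" "c \<in> carrier G"
        and sN: "(a,b,c,inv\<^bsub>G\<^esub> (a \<otimes>\<^bsub>G\<^esub> b \<otimes>\<^bsub>G\<^esub> c)) \<in> N" and Y: "Y = tclass G (a,b,c,inv\<^bsub>G\<^esub> (a \<otimes>\<^bsub>G\<^esub> b \<otimes>\<^bsub>G\<^esub> c))"
      show "rho S (pb23 G) Y = rho S (pb14 G) Y"
        using Y sN abc rcs rel23 tclass_conj tcp pN by simp
    qed
  qed
  have RC: "C \<otimes>\<^bsub>BijGroup S\<^esub> (B \<otimes>\<^bsub>BijGroup S\<^esub> A) = \<one>\<^bsub>BijGroup S\<^esub>"
  proof -
    have "compose S C (compose S B A) = (\<lambda>x\<in>S. x)"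
    proof (rule extensionalityI[OF compose_extensional restrict_extensional])
      fix Y assume "Y \<in> S"
      then show "compose S C (compose S B A) Y = (\<lambda>x\<in>S. x) Y"
      proof (rule cls)
        fix a b c assume abc: "a \<in> carrier G" "b \<in> carrier G" "c \<in> carrier G"
          and sN: "(a,b,c,inv\<^bsub>G\<^esub> (a \<otimes>\<^bsub>G\<^esub> b \<otimes>\<^bsub>G\<^esub> c)) \<in> N" and Y: "Y = tclass G (a,b,c,inv\<^bsub>G\<^esub> (a \<otimes>\<^bsub>G\<^esub> b \<otimes>\<^bsub>G\<^esub> c))"
        have "Y \<in> S" using Y sN S_eq by auto
        moreover have "C (B (A Y)) = Y"
          unfolding A_def B_def C_def using Y sN abc rcs relC tclass_conj tcp pN tcN by (simp del: tconj.simps)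
        ultimately show "compose S C (compose S B A) Y = (\<lambda>x\<in>S. x) Y"
          by (simp add: compose_eq)
      qed
    qed
    then show ?thesis using AB BB CB compose_Bij[OF BB AB] by (simp add: bg_mult bg_one)
  qed
  have R24: "D24 = A \<otimes>\<^bsub>BijGroup S\<^esub> (B \<otimes>\<^bsub>BijGroup S\<^esub> A)"
  proof -
    have "D24 = compose S A (compose S B A)"
    proof (rule extensionalityI[OF _ compose_extensional])
      show "D24 \<in> extensional S" unfolding D24_def by (rule rho_ext)
      fix Y assume "Y \<in> S"
      then show "D24 Y = compose S A (compose S B A) Y"
      proof (rule cls)
        fix a b c assume abc: "a \<in> carrier G" "b \<in> carrier G" "c \<in> carrier G"
          and sN: "(a,b,c,inv\<^bsub>G\<^esub> (a \<otimes>\<^bsub>G\<^esub> b \<otimes>\<^bsub>G\<^esub> c)) \<in> N" and Y: "Y = tclass G (a,b,c,inv\<^bsub>G\<^esub> (a \<otimes>\<^bsub>G\<^esub> b \<otimes>\<^bsub>G\<^esub> c))"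
        have YS: "Y \<in> S" using Y sN S_eq by auto
        have DS: "D24 Y \<in> S" unfolding D24_def using Y sN rcs pN S_eq by auto
        have "A (D24 Y) = B (A Y)"
          unfolding A_def B_def D24_def using Y sN abc rcs rel24 tclass_conj tcp pN tcN by (simp del: tconj.simps)
        then have "A (A (D24 Y)) = A (B (A Y))" by simp
        then have "D24 Y = A (B (A Y))" using AA DS by simp
        then show "D24 Y = compose S A (compose S B A) Y" using YS by (simp add: compose_eq)
      qed
    qed
    then show ?thesis using AB BB compose_Bij[OF BB AB] by (simp add: bg_mult)
  qed
  have al: "C = A \<otimes>\<^bsub>BijGroup S\<^esub> B" "B \<otimes>\<^bsub>BijGroup S\<^esub> A = A \<otimes>\<^bsub>BijGroup S\<^esub> B"
    using alg[OF group_BijGroup AK BK CK oA(1) oB(1) oC(1) RC] by auto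
  have D24B: "D24 = B" using R24 al AK BK oA(1) by (simp add: K.m_assoc[symmetric])
  have gens: "rho4_gens G C1 C2 C3 C4 = {A, B, A \<otimes>\<^bsub>BijGroup S\<^esub> B}"
  proof -
    have "rho4_gens G C1 C2 C3 C4 = {A, B, C, D23, D24, D34}"
      by (simp add: Let_def rho4_gens_def A_def B_def C_def D23_def D24_def D34_def S_def)
    then show ?thesis using R23 R34 D24B al by auto
  qed
  have img: "rho4_image G C1 C2 C3 C4 = (BijGroup S)\<lparr>carrier := generate (BijGroup S) (rho4_gens G C1 C2 C3 C4)\<rparr>"
    by (simp add: Let_def rho4_image_def S_def)
  show ?thesis unfolding img gens
    by (rule klein_iso[OF group_BijGroup AK BK oA(1) oB(1) al(2) oA(2) oB(2)])
       (use al oC(2) in simp)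
qed


end
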